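(* Consider a logical circuit on $n$ logical qubits in which $m$ logical measurements have been performed, in the setting described in the context. Then there exists a full-rank matrix $V\in\mathbb{Z}_2^{m\times m}$, each column $\vec v_i$ of which corresponds to a logical measurement product, such that for each $i$ either $\vec v_i$ is a reliable logical Pauli product, or the (ideal) outcome of the product $\vec v_i$ is always uniformly random ($\pm1$ with probability $1/2$ each) and independent of the outcomes of the products corresponding to the other columns of $V$.
   Context: Setting: $n$ logical qubits, each initialized in a logical Pauli state $|\overline{0}\rangle$ or $|\overline{+}\rangle$ or in a magic state $|\overline{T}\rangle=(|\overline{0}\rangle+e^{i\pi/4}|\overline{1}\rangle)/\sqrt2$, acted on by (possibly classically conditioned) logical Clifford gates and single-qubit logical $\overline{Z}$ or $\overline{X}$ measurements. Upon execution this is a Clifford circuit, so every logical measurement is associated with a logical Pauli operator that can be back-propagated (conjugated by the preceding Clifford gates) to the initialization time. A product of a subset of the $m$ measurements is identified with a vector $\vec v\in\mathbb{Z}_2^m$ whose $j$th entry is $1$ iff the product includes the $j$th measurement. Define $M\in\mathbb{Z}_2^{2n\times m}$ by: the entry in row $i$ (resp. row $n+i$), column $j$ is $1$ iff the back-propagation of measurement $j$ to the initialization time has an $\overline{X}$-component (resp. $\overline{Z}$-component) on logical qubit $i$ (a $\overline{Y}$ has both). Let $\vec e_{x,i},\vec e_{z,i}\in\mathbb{Z}_2^{2n}$ be the unit vectors with a single $1$ in position $i$, respectively $n+i$. Let $B$ be the set containing: both $\vec e_{x,i}$ and $\vec e_{z,i}$ if qubit $i$ is initialized in $|\overline{T}\rangle$;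 only $\vec e_{z,i}$ if qubit $i$ is initialized in $|\overline{0}\rangle$; only $\vec e_{x,i}$ if qubit $i$ is initialized in $|\overline{+}\rangle$. A measurement product $\vec v$ is called a reliable logical Pauli product if $M\vec v\in\operatorname{span}B$.
   Formalization: Each back-propagated logical measurement carries a fixed sign and fixed $\overline{X}$/$\overline{Z}$ components, not depending on earlier outcomes, and each random column is independent of the joint outcomes of all other columns. Apart from conventions, each condition added here is assumed in the paper as well or is needed for the statement above to hold. *)

theory Defs
  imports Complex_Main "HOL-Library.Z2"
begin

datatype init_state = Init0 | InitPlus | InitT

text \<open>Computational basis of n qubits: bit strings b (b q = True means |1> on qubit q),
  with b q = False for q >= n.  States are amplitude functions on this basis.\<close>
definition basis :: "nat \<Rightarrow> (nat \<Rightarrow> bool) set" where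
  "basis n = {b. \<forall>q. n \<le> q \<longrightarrow> \<not> b q}"

type_synonym qstate = "(nat \<Rightarrow> bool) \<Rightarrow> complex"

definition flipb :: "nat \<Rightarrow> (nat \<Rightarrow> bit) \<Rightarrow> (nat \<Rightarrow> bool) \<Rightarrow> (nat \<Rightarrow> bool)" where
  "flipb n x b = (\<lambda>q. if q < n \<and> x q = 1 then \<not> b q else b q)"

text \<open>Hermitian Pauli operator with X-part x and Z-part z (Y = i X Z on each qubit):
  P = i^(number of Y's) * X^x Z^z.\<close>
definition pauli_apply :: "nat \<Rightarrow> (nat \<Rightarrow> bit) \<Rightarrow> (nat \<Rightarrow> bit) \<Rightarrow> qstate \<Rightarrow> qstate" where
  "pauli_apply n x z \<psi> b =
     \<i> ^ card {q. q < n \<and> x q = 1 \<and> z q = 1}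
     * (-1) ^ card {q. q < n \<and> z q = 1 \<and> flipb n x b q}
     * \<psi> (flipb n x b)"

text \<open>Projector onto outcome r (r = True meaning eigenvalue -1) of the observable
  (-1)^s P:  (I + (-1)^(s+r) P) / 2.\<close>
definition meas_proj :: "nat \<Rightarrow> (nat \<Rightarrow> bit) \<Rightarrow> (nat \<Rightarrow> bit) \<Rightarrow> bool \<Rightarrow> bool \<Rightarrow> qstate \<Rightarrow> qstate" where
  "meas_proj n x z s r \<psi> = (\<lambda>b. (\<psi> b + (if s = r then 1 else -1) * pauli_apply n x z \<psi> b) / 2)"

definition amp :: "init_state \<Rightarrow> bool \<Rightarrow> complex" where
  "amp st v = (case st of
      Init0 \<Rightarrow> (if v then 0 else 1)
    | InitPlus \<Rightarrow> 1 / complex_of_real (sqrt 2)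
    | InitT \<Rightarrow> (if v then cis (pi / 4) else 1) / complex_of_real (sqrt 2))"

definition init_vec :: "nat \<Rightarrow> (nat \<Rightarrow> init_state) \<Rightarrow> qstate" where
  "init_vec n init b = (\<Prod>q<n. amp (init q) (b q))"

text \<open>Unnormalised post-measurement state after the first k measurements with outcome
  record os (os ! j = True means outcome -1 of measurement j).  Measurement j measures the
  back-propagated logical Pauli (-1)^(sg j) * P(bx j, bz j) on the initial state
  (Heisenberg picture of the Clifford circuit).\<close>
primrec unnorm :: "nat \<Rightarrow> (nat \<Rightarrow> init_state) \<Rightarrow> (nat \<Rightarrow> nat \<Rightarrow> bit) \<Rightarrow> (nat \<Rightarrow> nat \<Rightarrow> bit)
    \<Rightarrow> (nat \<Rightarrow> bool) \<Rightarrow> nat \<Rightarrow> bool list \<Rightarrow> qstate" where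
  "unnorm n init bx bz sg 0 os = init_vec n init"
| "unnorm n init bx bz sg (Suc k) os =
     meas_proj n (bx k) (bz k) (sg k) (os ! k) (unnorm n init bx bz sg k os)"

definition outcome_prob :: "nat \<Rightarrow> nat \<Rightarrow> (nat \<Rightarrow> init_state) \<Rightarrow> (nat \<Rightarrow> nat \<Rightarrow> bit)
    \<Rightarrow> (nat \<Rightarrow> nat \<Rightarrow> bit) \<Rightarrow> (nat \<Rightarrow> bool) \<Rightarrow> bool list \<Rightarrow> real" where
  "outcome_prob n m init bx bz sg os =
     (\<Sum>b\<in>basis n. (cmod (unnorm n init bx bz sg m os b))\<^sup>2)"

definition event_prob :: "nat \<Rightarrow> nat \<Rightarrow> (nat \<Rightarrow> init_state) \<Rightarrow> (nat \<Rightarrow> nat \<Rightarrow> bit)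
    \<Rightarrow> (nat \<Rightarrow> nat \<Rightarrow> bit) \<Rightarrow> (nat \<Rightarrow> bool) \<Rightarrow> (bool list \<Rightarrow> bool) \<Rightarrow> real" where
  "event_prob n m init bx bz sg E =
     (\<Sum>os\<in>{os. length os = m \<and> E os}. outcome_prob n m init bx bz sg os)"

text \<open>Outcome of the measurement product v, as an element of Z_2 (1 means -1).\<close>
definition prod_outcome :: "nat \<Rightarrow> (nat \<Rightarrow> bit) \<Rightarrow> bool list \<Rightarrow> bit" where
  "prod_outcome m v os = (\<Sum>j<m. v j * (if os ! j then 1 else 0))"

definition Mmat :: "nat \<Rightarrow> (nat \<Rightarrow> nat \<Rightarrow> bit) \<Rightarrow> (nat \<Rightarrow> nat \<Rightarrow> bit) \<Rightarrow> nat \<Rightarrow> nat \<Rightarrow> bit" where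
  "Mmat n bx bz r j = (if r < n then bx j r else bz j (r - n))"

definition mat_vec :: "nat \<Rightarrow> (nat \<Rightarrow> nat \<Rightarrow> bit) \<Rightarrow> (nat \<Rightarrow> bit) \<Rightarrow> (nat \<Rightarrow> bit)" where
  "mat_vec m A v = (\<lambda>r. \<Sum>j<m. A r j * v j)"

definition ex :: "nat \<Rightarrow> nat \<Rightarrow> bit" where
  "ex i = (\<lambda>r. if r = i then 1 else 0)"

definition ez :: "nat \<Rightarrow> nat \<Rightarrow> nat \<Rightarrow> bit" where
  "ez n i = (\<lambda>r. if r = n + i then 1 else 0)"

definition Bset :: "nat \<Rightarrow> (nat \<Rightarrow> init_state) \<Rightarrow> (nat \<Rightarrow> bit) set" where
  "Bset n init = {ex i | i. i < n \<and> init i \<noteq> Init0} \<union> {ez n i | i. i < n \<and> init i \<noteq> InitPlus}"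

definition in_span2 :: "nat \<Rightarrow> (nat \<Rightarrow> bit) set \<Rightarrow> (nat \<Rightarrow> bit) \<Rightarrow> bool" where
  "in_span2 d S w = (\<exists>c :: (nat \<Rightarrow> bit) \<Rightarrow> bit. \<forall>r<d. w r = (\<Sum>u\<in>S. c u * u r))"

definition reliable :: "nat \<Rightarrow> nat \<Rightarrow> (nat \<Rightarrow> init_state) \<Rightarrow> (nat \<Rightarrow> nat \<Rightarrow> bit)
    \<Rightarrow> (nat \<Rightarrow> nat \<Rightarrow> bit) \<Rightarrow> (nat \<Rightarrow> bit) \<Rightarrow> bool" where
  "reliable n m init bx bz v = in_span2 (2 * n) (Bset n init) (mat_vec m (Mmat n bx bz) v)"

text \<open>Full rank of an m x m matrix over Z_2 (V r i = entry in row r, column i):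
  its columns are linearly independent.\<close>
definition full_rank2 :: "nat \<Rightarrow> (nat \<Rightarrow> nat \<Rightarrow> bit) \<Rightarrow> bool" where
  "full_rank2 m V = (\<forall>c :: nat \<Rightarrow> bit. (\<forall>r<m. (\<Sum>i<m. V r i * c i) = 0) \<longrightarrow> (\<forall>i<m. c i = 0))"

definition random_indep :: "nat \<Rightarrow> nat \<Rightarrow> (nat \<Rightarrow> init_state) \<Rightarrow> (nat \<Rightarrow> nat \<Rightarrow> bit)
    \<Rightarrow> (nat \<Rightarrow> nat \<Rightarrow> bit) \<Rightarrow> (nat \<Rightarrow> bool) \<Rightarrow> (nat \<Rightarrow> nat \<Rightarrow> bit) \<Rightarrow> nat \<Rightarrow> bool" where
  "random_indep n m init bx bz sg V i =
    (\<forall>(a :: bit) (c :: nat \<Rightarrow> bit).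
       event_prob n m init bx bz sg
         (\<lambda>os. prod_outcome m (\<lambda>j. V j i) os = a
               \<and> (\<forall>k<m. k \<noteq> i \<longrightarrow> prod_outcome m (\<lambda>j. V j k) os = c k))
       = (1 / 2) * event_prob n m init bx bz sg
         (\<lambda>os. \<forall>k<m. k \<noteq> i \<longrightarrow> prod_outcome m (\<lambda>j. V j k) os = c k))"

end

theory Submission
  imports Defs
begin
declare add_bit_eq_xor[simp del] mult_bit_eq_and[simp del]
lemma bit_add_self[simp]: "(x::bit) + x = 0" by (cases x) simp_all

definition dot :: "nat \<Rightarrow> (nat \<Rightarrow> bit) \<Rightarrow> (nat \<Rightarrow> bit) \<Rightarrow> bit" where
  "dot m a v = (\<Sum>j<m. a j * v j)"

lemma dot_add_right: "dot m a (\<lambda>j. x j + y j) = dot m a x + dot m a y"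
  by (simp add: dot_def distrib_left sum.distrib)
lemma dot_add_left: "dot m (\<lambda>j. x j + y j) v = dot m x v + dot m y v"
  by (simp add: dot_def distrib_right sum.distrib)
lemma dot_sum_left: "dot m (\<lambda>j. \<Sum>i\<in>I. c i * A i j) v = (\<Sum>i\<in>I. c i * dot m (A i) v)"
  unfolding dot_def by (simp add: sum_distrib_left sum_distrib_right mult.assoc sum.swap[of _ I])

lemma good_sum:
  assumes g0: "good (\<lambda>_. 0)" and gadd: "\<And>a b. good a \<Longrightarrow> good b \<Longrightarrow> good (\<lambda>j. a j + b j)"
  shows "finite I \<Longrightarrow> (\<And>i. i\<in>I \<Longrightarrow> good (f i)) \<Longrightarrow> good (\<lambda>j. \<Sum>i\<in>I. f i j)"
proof (induction I rule: finite_induct)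
  case empty then show ?case using g0 by simp
next
  case (insert x F)
  then show ?case using gadd[of "f x" "\<lambda>j. \<Sum>i\<in>F. f i j"] by simp
qed

lemma good_smult:
  assumes g0: "good (\<lambda>_. 0)" and "good a"
  shows "good (\<lambda>j. (c::bit) * a j)"
  using assms by (cases c) simp_all

lemma LA:
  fixes good :: "(nat \<Rightarrow> bit) \<Rightarrow> bool"
  assumes g0: "good (\<lambda>_. 0)" and gadd: "\<And>a b. good a \<Longrightarrow> good b \<Longrightarrow> good (\<lambda>j. a j + b j)"
  shows "(\<forall>g\<in>set gs. good g) \<Longrightarrow> \<exists>V. full_rank2 m V \<and> (\<forall>i<m. (\<forall>g\<in>set gs. dot m g (\<lambda>j. V j i) = 0)
     \<or> (\<exists>a. good a \<and> dot m a (\<lambda>j. V j i) = 1 \<and> (\<forall>k<m. k \<noteq> i \<longrightarrow> dot m a (\<lambda>j. V j k) = 0)))"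
proof (induction gs)
  case Nil
  have e: "(\<Sum>i<m. (if r = i then 1 else 0) * c i) = c r" if "r < m" for r and c :: "nat \<Rightarrow> bit"
  proof -
    have "(\<Sum>i<m. (if r = i then 1 else 0) * c i) = (\<Sum>i<m. if r = i then c i else 0)"
      by (rule sum.cong) auto
    then show ?thesis using that by simp
  qed
  show ?case
    by (intro exI[of _ "\<lambda>r i. if r = i then 1 else 0"]) (simp add: full_rank2_def e)
next
  case (Cons g gs)
  then obtain V where fr: "full_rank2 m V" and inv: "\<forall>i<m. (\<forall>g\<in>set gs. dot m g (\<lambda>j. V j i) = 0)
     \<or> (\<exists>a. good a \<and> dot m a (\<lambda>j. V j i) = 1 \<and> (\<forall>k<m. k \<noteq> i \<longrightarrow> dot m a (\<lambda>j. V j k) = 0))"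
    by auto
  have gg: "good g" using Cons.prems by simp
  define Zs where "Zs i = (\<forall>g\<in>set gs. dot m g (\<lambda>j. V j i) = 0)" for i
  show ?case
  proof (cases "\<forall>i<m. Zs i \<longrightarrow> dot m g (\<lambda>j. V j i) = 0")
    case True
    show ?thesis
      by (rule exI[of _ V]) (use fr inv True in \<open>auto simp: Zs_def\<close>)
  next
    case False
    then obtain p where p: "p < m" "Zs p" "dot m g (\<lambda>j. V j p) = 1" by auto
    define Mod where "Mod = {k. k<m \<and> k \<noteq> p \<and> Zs k \<and> dot m g (\<lambda>j. V j k) = 1}"
    define V' where "V' = (\<lambda>r i. if i \<in> Mod then V r i + V r p else V r i)"
    have colV': "(\<lambda>j. V' j i) = (if i\<in>Mod then (\<lambda>j. V j i + V j p) else (\<lambda>j. V j i))" for i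
      by (auto simp: V'_def)
    define I1 where "I1 = {i. i<m \<and> \<not> Zs i}"
    have "\<forall>i\<in>I1. \<exists>a. good a \<and> dot m a (\<lambda>j. V j i) = 1 \<and> (\<forall>k<m. k \<noteq> i \<longrightarrow> dot m a (\<lambda>j. V j k) = 0)"
      using inv by (auto simp: I1_def Zs_def)
    then obtain A where A: "\<And>i. i\<in>I1 \<Longrightarrow> good (A i) \<and> dot m (A i) (\<lambda>j. V j i) = 1 \<and> (\<forall>k<m. k \<noteq> i \<longrightarrow> dot m (A i) (\<lambda>j. V j k) = 0)"
      by metis
    have ModI1: "k \<in> Mod \<Longrightarrow> k \<notin> I1" for k by (auto simp: Mod_def I1_def)
    have pI1: "p \<notin> I1" "p \<notin> Mod" using p by (auto simp: Mod_def I1_def)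
    have dA: "dot m (A i) (\<lambda>j. V' j k) = (if k = i then 1 else 0)" if "i \<in> I1" "k < m" for i k
    proof (cases "k \<in> Mod")
      case True
      then have "k \<noteq> i" "p \<noteq> i" using ModI1 pI1 that by auto
      then show ?thesis using True A[OF that(1)] that p by (simp add: colV' dot_add_right)
    next
      case False
      then show ?thesis using A[OF that(1)] that by (simp add: colV')
    qed
    define a' where "a' = (\<lambda>j. g j + (\<Sum>i\<in>I1. dot m g (\<lambda>j. V j i) * A i j))"
    have fI1: "finite I1" by (simp add: I1_def)
    have gs1: "good (\<lambda>j. dot m g (\<lambda>j. V j i) * A i j)" if "i \<in> I1" for i
      using good_smult[of good, OF g0, of "A i"] A[OF that] by blast
    have gs2: "good (\<lambda>j. \<Sum>i\<in>I1. dot m g (\<lambda>j. V j i) * A i j)"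
      using good_sum[of good, OF g0 gadd fI1, of "\<lambda>i j. dot m g (\<lambda>j. V j i) * A i j"] gs1 by blast
    have ga': "good a'" unfolding a'_def using gadd[OF gg gs2] .
    have da': "dot m a' (\<lambda>j. V' j k) = dot m g (\<lambda>j. V' j k) + (if k \<in> I1 then dot m g (\<lambda>j. V j k) else 0)"
      if "k < m" for k
    proof -
      have "dot m a' (\<lambda>j. V' j k) = dot m g (\<lambda>j. V' j k) + (\<Sum>i\<in>I1. dot m g (\<lambda>j. V j i) * dot m (A i) (\<lambda>j. V' j k))"
        unfolding a'_def by (simp add: dot_add_left dot_sum_left)
      also have "(\<Sum>i\<in>I1. dot m g (\<lambda>j. V j i) * dot m (A i) (\<lambda>j. V' j k))
          = (\<Sum>i\<in>I1. dot m g (\<lambda>j. V j i) * (if k = i then 1 else 0))"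
        by (rule sum.cong) (simp_all add: dA that)
      also have "\<dots> = (if k \<in> I1 then dot m g (\<lambda>j. V j k) else 0)"
        using fI1 by (simp add: if_distrib cong: if_cong)
      finally show ?thesis .
    qed
    have Zcol: "(\<forall>g'\<in>set (g#gs). dot m g' (\<lambda>j. V' j i) = 0)" if "i < m" "Zs i" "i \<noteq> p" for i
    proof (cases "i \<in> Mod")
      case True
      then have "dot m g (\<lambda>j. V j i) = 1" by (simp add: Mod_def)
      then show ?thesis using True p that by (auto simp: colV' dot_add_right Zs_def)
    next
      case False
      then have "dot m g (\<lambda>j. V j i) = 0" using that by (auto simp: Mod_def)
      then show ?thesis using False p that by (auto simp: colV' Zs_def)
    qed
    have frV': "full_rank2 m V'"
      unfolding full_rank2_def
    proof (rule allI, rule impI)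
      fix c :: "nat \<Rightarrow> bit"
      assume h: "\<forall>r<m. (\<Sum>i<m. V' r i * c i) = 0"
      define X where "X = (\<Sum>k\<in>Mod. c k)"
      define c2 where "c2 i = c i + (if i = p then X else 0)" for i
      have ModS: "Mod \<subseteq> {..<m}" by (auto simp: Mod_def)
      have "(\<Sum>i<m. V r i * c2 i) = 0" if "r < m" for r
      proof -
        have "(\<Sum>i<m. V' r i * c i) = (\<Sum>i<m. V r i * c i + (if i \<in> Mod then V r p * c i else 0))"
          by (rule sum.cong) (auto simp: V'_def distrib_right)
        also have "\<dots> = (\<Sum>i<m. V r i * c i) + V r p * X"
          using ModS by (simp add: sum.distrib sum.If_cases X_def sum_distrib_left Int_absorb1)
        finally have e1: "(\<Sum>i<m. V' r i * c i) = (\<Sum>i<m. V r i * c i) + V r p * X" .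
        have "(\<Sum>i<m. V r i * c2 i) = (\<Sum>i<m. V r i * c i + (if i = p then V r p * X else 0))"
          by (rule sum.cong) (auto simp: c2_def distrib_left)
        also have "\<dots> = (\<Sum>i<m. V r i * c i) + V r p * X"
          using p by (simp add: sum.distrib)
        finally show ?thesis using e1 h that by simp
      qed
      then have c20: "\<forall>i<m. c2 i = 0" using fr unfolding full_rank2_def by blast
      then have cne: "c i = 0" if "i < m" "i \<noteq> p" for i using that by (auto simp: c2_def)
      have "X = 0" unfolding X_def by (rule sum.neutral) (auto simp: Mod_def cne)
      then have "c p = 0" using c20 p by (auto simp: c2_def)
      then show "\<forall>i<m. c i = 0" using cne by auto
    qed
    show ?thesis
    proof (rule exI[of _ V'], intro conjI frV' allI impI)
      fix i assume i: "i < m"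
      show "(\<forall>g\<in>set (g # gs). dot m g (\<lambda>j. V' j i) = 0) \<or>
         (\<exists>a. good a \<and> dot m a (\<lambda>j. V' j i) = 1 \<and> (\<forall>k<m. k \<noteq> i \<longrightarrow> dot m a (\<lambda>j. V' j k) = 0))"
      proof (cases "i = p")
        case True
        have "dot m a' (\<lambda>j. V' j p) = 1" using da'[OF p(1)] pI1 p by (simp add: colV')
        moreover have "dot m a' (\<lambda>j. V' j k) = 0" if "k < m" "k \<noteq> p" for k
        proof (cases "k \<in> I1")
          case True
          then have "k \<notin> Mod" using ModI1 by auto
          then show ?thesis using da'[OF that(1)] True by (simp add: colV')
        next
          case False
          then have "Zs k" using that by (auto simp: I1_def)
          then have "dot m g (\<lambda>j. V' j k) = 0" using Zcol[OF that(1) _ that(2)] by simp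
          then show ?thesis using da'[OF that(1)] False by simp
        qed
        ultimately show ?thesis using True ga' by blast
      next
        case False
        show ?thesis
        proof (cases "i \<in> I1")
          case True
          then have "i \<notin> Mod" using ModI1 by auto
          then have "dot m (A i) (\<lambda>j. V' j i) = 1" using A[OF True] by (simp add: colV')
          moreover have "\<forall>k<m. k \<noteq> i \<longrightarrow> dot m (A i) (\<lambda>j. V' j k) = 0" using dA[OF True] by simp
          ultimately show ?thesis using A[OF True] by blast
        next
          case F2: False
          then have "Zs i" using i by (auto simp: I1_def)
          then show ?thesis using Zcol[OF i _ False] by blast
        qed
      qed
    qed
  qed
qed

definition fl :: "(nat \<Rightarrow> bit) \<Rightarrow> bool list \<Rightarrow> bool list" where
  "fl a os = map (\<lambda>j. if a j = 1 then \<not> os ! j else os ! j) [0..<length os]"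

lemma length_fl[simp]: "length (fl a os) = length os" by (simp add: fl_def)
lemma nth_fl[simp]: "k < length os \<Longrightarrow> fl a os ! k = (if a k = 1 then \<not> os ! k else os ! k)"
  by (simp add: fl_def)
lemma fl_fl: "fl b (fl a os) = fl (\<lambda>j. a j + b j) os"
proof (rule nth_equalityI)
  fix i assume "i < length (fl b (fl a os))"
  then show "fl b (fl a os) ! i = fl (\<lambda>j. a j + b j) os ! i"
    by (cases "a i"; cases "b i") simp_all
qed simp
lemma fl_zero: "fl (\<lambda>_. 0) os = os"
  by (rule nth_equalityI) auto
lemma fl_invol: "fl a (fl a os) = os"
  using fl_fl[of a a os] fl_zero by simp

lemma flipb_upd: "q < n \<Longrightarrow> flipb n x (b(q := \<not> b q)) = (flipb n x b)(q := \<not> flipb n x b q)"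
  by (auto simp: flipb_def fun_eq_iff)

lemma pauli_Z:
  assumes "q < n"
  shows "pauli_apply n x z (\<lambda>b. (if b q then -1 else 1) * \<psi> b) b
     = (if x q = 1 then -1 else 1) * ((if b q then -1 else 1) * pauli_apply n x z \<psi> b)"
  using assms by (cases "x q"; cases "b q") (simp_all add: pauli_apply_def flipb_def)

lemma mp_Z:
  assumes "q < n"
  shows "meas_proj n x z s (if x q = 1 then \<not> r else r) (\<lambda>b. (if b q then -1 else 1) * \<psi> b)
     = (\<lambda>b. (if b q then -1 else 1) * meas_proj n x z s r \<psi> b)"
  unfolding meas_proj_def fun_eq_iff pauli_Z[OF assms]
  by (intro allI; cases "x q"; cases s; cases r) (simp_all add: algebra_simps)

lemma card_sign:
  fixes z :: "nat \<Rightarrow> bit" and c :: "nat \<Rightarrow> bool"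
  assumes "q < (n::nat)"
  shows "(-1::complex) ^ card {q'. q' < n \<and> z q' = 1 \<and> (c(q := \<not> c q)) q'}
       = (if z q = 1 then -1 else 1) * (-1) ^ card {q'. q' < n \<and> z q' = 1 \<and> c q'}"
proof -
  define T where "T = {q'. q' < n \<and> q' \<noteq> q \<and> z q' = 1 \<and> c q'}"
  have "finite T" by (rule finite_subset[OF _ finite_lessThan[of n]]) (auto simp: T_def)
  moreover have "q \<notin> T" by (simp add: T_def)
  ultimately have fT: "finite T" "q \<notin> T" by auto
  have s1: "{q'. q' < n \<and> z q' = 1 \<and> (c(q := \<not> c q)) q'} = (if z q = 1 \<and> \<not> c q then insert q T else T)"
    using assms by (auto simp: T_def)
  have s2: "{q'. q' < n \<and> z q' = 1 \<and> c q'} = (if z q = 1 \<and> c q then insert q T else T)"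
    using assms by (auto simp: T_def)
  show ?thesis unfolding s1 s2 using fT by (cases "z q"; cases "c q") simp_all
qed

lemma pauli_X:
  assumes "q < n"
  shows "pauli_apply n x z (\<lambda>b. \<psi> (b(q := \<not> b q))) b
     = (if z q = 1 then -1 else 1) * pauli_apply n x z \<psi> (b(q := \<not> b q))"
  unfolding pauli_apply_def flipb_upd[OF assms] card_sign[OF assms, of z "flipb n x b"]
  by (simp add: flipb_upd[OF assms])

lemma mp_X:
  assumes "q < n"
  shows "meas_proj n x z s (if z q = 1 then \<not> r else r) (\<lambda>b. \<psi> (b(q := \<not> b q)))
     = (\<lambda>b. meas_proj n x z s r \<psi> (b(q := \<not> b q)))"
  unfolding meas_proj_def fun_eq_iff pauli_X[OF assms]
  by (intro allI; cases "z q"; cases s; cases r) (simp_all add: algebra_simps)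

lemma unnorm_Z:
  assumes q: "q < n" and iq: "init q = Init0"
  shows "k \<le> length os \<Longrightarrow> unnorm n init bx bz sg k (fl (\<lambda>j. bx j q) os)
     = (\<lambda>b. (if b q then -1 else 1) * unnorm n init bx bz sg k os b)"
proof (induction k)
  case 0
  have h: "init_vec n init b = (if b q then -1 else 1) * init_vec n init b" for b
  proof (cases "b q")
    case True
    have "init_vec n init b = 0" unfolding init_vec_def
      using q iq True by (auto simp: amp_def intro!: bexI[of _ q])
    then show ?thesis by simp
  qed simp
  show ?case by (rule ext, simp only: unnorm.simps, rule h)
next
  case (Suc k)
  then have k: "k < length os" by simp
  show ?case
    using Suc.IH k mp_Z[OF q, of "bx k" "bz k" "sg k" "os ! k" "unnorm n init bx bz sg k os"]
    by simp
qed

lemma unnorm_X: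
  assumes q: "q < n" and iq: "init q = InitPlus"
  shows "k \<le> length os \<Longrightarrow> unnorm n init bx bz sg k (fl (\<lambda>j. bz j q) os)
     = (\<lambda>b. unnorm n init bx bz sg k os (b(q := \<not> b q)))"
proof (induction k)
  case 0
  have h: "init_vec n init b = init_vec n init (b(q := \<not> b q))" for b
    unfolding init_vec_def
    by (rule prod.cong) (use iq in \<open>auto simp: amp_def\<close>)
  show ?case by (rule ext, simp only: unnorm.simps, rule h)
next
  case (Suc k)
  then have k: "k < length os" by simp
  note IH = Suc.IH[OF Suc_leD[OF Suc.prems]]
  show ?case by (simp only: unnorm.simps nth_fl[OF k] IH mp_X[OF q])
qed

lemma op_Z:
  assumes q: "q < n" and iq: "init q = Init0" and l: "length os = m"
  shows "outcome_prob n m init bx bz sg (fl (\<lambda>j. bx j q) os) = outcome_prob n m init bx bz sg os"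
  unfolding outcome_prob_def unnorm_Z[where q=q and n=n and init=init and bx=bx and bz=bz and sg=sg and k=m and os=os, OF q iq, simplified l, simplified]
  by (rule sum.cong) (auto simp: norm_mult)

lemma op_X:
  assumes q: "q < n" and iq: "init q = InitPlus" and l: "length os = m"
  shows "outcome_prob n m init bx bz sg (fl (\<lambda>j. bz j q) os) = outcome_prob n m init bx bz sg os"
  unfolding outcome_prob_def unnorm_X[where q=q and n=n and init=init and bx=bx and bz=bz and sg=sg and k=m and os=os, OF q iq, simplified l, simplified]
proof (rule sum.reindex_bij_witness[of _ "\<lambda>b. b(q := \<not> b q)" "\<lambda>b. b(q := \<not> b q)"])
qed (use q in \<open>auto simp: basis_def\<close>)

lemma prod_fl:
  assumes "length os = m"
  shows "prod_outcome m v (fl a os) = prod_outcome m v os + dot m a v"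
proof -
  have "prod_outcome m v (fl a os) = (\<Sum>j<m. v j * (if os ! j then 1 else 0) + a j * v j)"
    unfolding prod_outcome_def
  proof (rule sum.cong[OF refl])
    fix x assume "x \<in> {..<m}"
    then have "x < length os" using assms by simp
    then show "v x * (if fl a os ! x then 1 else 0) = v x * (if os ! x then 1 else 0) + a x * v x"
      by (cases "a x"; cases "os ! x") simp_all
  qed
  then show ?thesis by (simp add: sum.distrib prod_outcome_def dot_def)
qed

lemma fin_os: "finite {os :: bool list. length os = m \<and> P os}"
  by (rule finite_subset[OF _ finite_lists_length_eq[of "UNIV :: bool set" m]]) auto

lemma ex_inj: "inj ex"
  by (rule injI) (metis ex_def zero_neq_one)

lemma bit_cases2: "(x::bit) \<noteq> y \<Longrightarrow> x = y + 1"
  by (cases x; cases y) simp_all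

theorem lemma1:
  fixes n m :: nat
    and init :: "nat \<Rightarrow> init_state"
    and bx bz :: "nat \<Rightarrow> nat \<Rightarrow> bit"
    and sg :: "nat \<Rightarrow> bool"
  shows "\<exists>V :: nat \<Rightarrow> nat \<Rightarrow> bit. full_rank2 m V \<and>
           (\<forall>i<m. reliable n m init bx bz (\<lambda>j. V j i)
                  \<or> random_indep n m init bx bz sg V i)"
proof -
  define OP where "OP = outcome_prob n m init bx bz sg"
  define good where "good a = (\<forall>os. length os = m \<longrightarrow> OP (fl a os) = OP os)" for a
  have g0: "good (\<lambda>_. 0)" by (simp add: good_def fl_zero)
  have gadd: "good (\<lambda>j. a j + b j)" if "good a" "good b" for a b
    using that unfolding good_def by (metis fl_fl length_fl)
  define gs where "gs = map (\<lambda>q j. bx j q) (filter (\<lambda>q. init q = Init0) [0..<n])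
      @ map (\<lambda>q j. bz j q) (filter (\<lambda>q. init q = InitPlus) [0..<n])"
  have ggs: "\<forall>g\<in>set gs. good g"
    unfolding gs_def good_def OP_def using op_Z op_X by auto
  obtain V where fr: "full_rank2 m V" and inv: "\<forall>i<m. (\<forall>g\<in>set gs. dot m g (\<lambda>j. V j i) = 0)
     \<or> (\<exists>a. good a \<and> dot m a (\<lambda>j. V j i) = 1 \<and> (\<forall>k<m. k \<noteq> i \<longrightarrow> dot m a (\<lambda>j. V j k) = 0))"
    using LA[of good, OF g0 gadd ggs] by blast
  show ?thesis
  proof (rule exI[of _ V], intro conjI fr allI impI)
    fix i assume i: "i < m"
    from inv i show "reliable n m init bx bz (\<lambda>j. V j i) \<or> random_indep n m init bx bz sg V i"
    proof (elim allE impE disjE)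
      assume orth: "\<forall>g\<in>set gs. dot m g (\<lambda>j. V j i) = 0"
      define w where "w = mat_vec m (Mmat n bx bz) (\<lambda>j. V j i)"
      have w0: "w r = 0" if "r < n" "init r = Init0" for r
        using orth that unfolding w_def mat_vec_def Mmat_def gs_def dot_def by auto
      have w1: "w (n + q) = 0" if "q < n" "init q = InitPlus" for q
        using orth that unfolding w_def mat_vec_def Mmat_def gs_def dot_def by auto
      define S where "S = {i. i < n \<and> init i \<noteq> Init0} \<union> (\<lambda>i. n + i) ` {i. i < n \<and> init i \<noteq> InitPlus}"
      have ezeq: "ez n i = ex (n + i)" for i by (simp add: ez_def ex_def)
      have BS: "Bset n init = ex ` S"
        unfolding Bset_def S_def ezeq by blast
      have fS: "finite S" unfolding S_def by auto
      define c where "c u = w (SOME r. u r = 1)" for u :: "nat \<Rightarrow> bit"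
      have cex: "c (ex s) = w s" for s
        unfolding c_def by (rule arg_cong[where f=w], rule some_equality) (auto simp: ex_def split: if_splits)
      have "w r = (\<Sum>u\<in>Bset n init. c u * u r)" if "r < 2 * n" for r
      proof -
        have "(\<Sum>u\<in>Bset n init. c u * u r) = (\<Sum>s\<in>S. c (ex s) * ex s r)"
          unfolding BS by (simp add: sum.reindex[OF inj_on_subset[OF ex_inj]])
        also have "\<dots> = (\<Sum>s\<in>S. if s = r then w r else 0)"
          by (rule sum.cong[OF refl]) (subst cex, simp add: ex_def)
        also have "\<dots> = (if r \<in> S then w r else 0)" using fS by (simp add: sum.delta')
        also have "\<dots> = w r"
        proof (cases "r \<in> S")
          case False
          show ?thesis
          proof (cases "r < n")
            case True
            have "init r = Init0"
            proof (rule ccontr)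
              assume "init r \<noteq> Init0"
              then have "r \<in> S" using True unfolding S_def by blast
              then show False using False by simp
            qed
            then show ?thesis using w0 True by simp
          next
            case F2: False
            define q where "q = r - n"
            have q: "r = n + q" "q < n" using that F2 by (simp_all add: q_def)
            have "init q = InitPlus"
            proof (rule ccontr)
              assume "init q \<noteq> InitPlus"
              then have "r \<in> S" using q unfolding S_def by blast
              then show False using False by simp
            qed
            then show ?thesis using w1[OF q(2)] q(1) by simp
          qed
        qed simp
        finally show ?thesis by simp
      qed
      then have "in_span2 (2 * n) (Bset n init) w" unfolding in_span2_def by blast
      then show ?thesis unfolding reliable_def w_def by blast
    next
      assume "\<exists>a. good a \<and> dot m a (\<lambda>j. V j i) = 1 \<and> (\<forall>k<m. k \<noteq> i \<longrightarrow> dot m a (\<lambda>j. V j k) = 0)"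
      then obtain a where ga: "good a" and ai: "dot m a (\<lambda>j. V j i) = 1"
        and ak: "\<And>k. k < m \<Longrightarrow> k \<noteq> i \<Longrightarrow> dot m a (\<lambda>j. V j k) = 0" by blast
      have "random_indep n m init bx bz sg V i"
        unfolding random_indep_def
      proof (intro allI)
        fix a0 :: bit and c :: "nat \<Rightarrow> bit"
        define R where "R os = (\<forall>k<m. k \<noteq> i \<longrightarrow> prod_outcome m (\<lambda>j. V j k) os = c k)" for os
        define P where "P os = prod_outcome m (\<lambda>j. V j i) os" for os
        define S where "S x = {os. length os = m \<and> P os = x \<and> R os}" for x
        have split: "{os. length os = m \<and> R os} = S a0 \<union> S (a0 + 1)"
          unfolding S_def using bit_cases2 by auto
        have disj: "S a0 \<inter> S (a0 + 1) = {}" unfolding S_def by auto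
        have fin: "finite (S x)" for x unfolding S_def using fin_os by simp
        have Pfl: "P (fl a os) = P os + 1" if "length os = m" for os
          using prod_fl[OF that] ai by (simp add: P_def)
        have Rfl: "R (fl a os) = R os" if "length os = m" for os
          using prod_fl[OF that] ak by (simp add: R_def)
        have sw: "sum OP (S a0) = sum OP (S (a0 + 1))"
        proof (rule sum.reindex_bij_witness[of _ "fl a" "fl a"])
          show "\<And>x. x \<in> S (a0 + 1) \<Longrightarrow> fl a (fl a x) = x" by (simp add: fl_invol)
          show "\<And>x. x \<in> S (a0 + 1) \<Longrightarrow> fl a x \<in> S a0"
            unfolding S_def using Pfl Rfl by auto
          show "\<And>x. x \<in> S a0 \<Longrightarrow> fl a (fl a x) = x" by (simp add: fl_invol)
          show "\<And>x. x \<in> S a0 \<Longrightarrow> fl a x \<in> S (a0 + 1)"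
            unfolding S_def using Pfl Rfl by auto
          show "\<And>x. x \<in> S a0 \<Longrightarrow> OP (fl a x) = OP x"
            using ga unfolding good_def S_def by auto
        qed
        have "event_prob n m init bx bz sg R = sum OP (S a0) + sum OP (S (a0 + 1))"
          unfolding event_prob_def OP_def[symmetric] split
          by (rule sum.union_disjoint[OF fin fin disj])
        moreover have "event_prob n m init bx bz sg (\<lambda>os. P os = a0 \<and> R os) = sum OP (S a0)"
          unfolding event_prob_def OP_def[symmetric] S_def by simp
        ultimately show "event_prob n m init bx bz sg
         (\<lambda>os. prod_outcome m (\<lambda>j. V j i) os = a0 \<and> (\<forall>k<m. k \<noteq> i \<longrightarrow> prod_outcome m (\<lambda>j. V j k) os = c k))
         = 1 / 2 * event_prob n m init bx bz sg (\<lambda>os. \<forall>k<m. k \<noteq> i \<longrightarrow> prod_outcome m (\<lambda>j. V j k) os = c k)"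
          using sw unfolding P_def R_def by simp
      qed
      then show ?thesis by blast
    qed
  qed
qed

end
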